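(* Let $M$ be a Noetherian right $R$-module having the summand sum property. Then $M$ is principally Goldie*-lifting if and only if $M$ is Goldie*-lifting.
   Context: $R$ is an associative ring with identity; modules are unital right $R$-modules. $M$ has the summand sum property if the sum of any two direct summands of $M$ is a direct summand. $K\ll M$ means $K$ is small in $M$. For submodules $X,Y$ of $M$, $X\,\beta^*\,Y$ means $(X+Y)/X\ll M/X$ and $(X+Y)/Y\ll M/Y$. $M$ is Goldie*-lifting if for every submodule $X$ of $M$ there is a direct summand $D$ of $M$ with $X\,\beta^*\,D$; $M$ is principally Goldie*-lifting if this holds for every cyclic submodule $X$. *)

theory Defs
  imports Main
begin

text \<open>Right modules over a ring R (given by a type of class ring_1: associative
  ring with identity, not necessarily commutative), represented by an explicit
  carrier with operations, so that quotient modules can be formed.\<close>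

record ('r, 'm) rmod =
  carrier :: "'m set"
  madd :: "'m \<Rightarrow> 'm \<Rightarrow> 'm"
  mzero :: 'm
  smult :: "'m \<Rightarrow> 'r \<Rightarrow> 'm"

definition rmodule :: "('r::ring_1, 'm) rmod \<Rightarrow> bool" where
  "rmodule M \<longleftrightarrow>
     mzero M \<in> carrier M \<and>
     (\<forall>x\<in>carrier M. \<forall>y\<in>carrier M. madd M x y \<in> carrier M) \<and>
     (\<forall>x\<in>carrier M. \<forall>y\<in>carrier M. \<forall>z\<in>carrier M.
        madd M (madd M x y) z = madd M x (madd M y z)) \<and>
     (\<forall>x\<in>carrier M. \<forall>y\<in>carrier M. madd M x y = madd M y x) \<and>
     (\<forall>x\<in>carrier M. madd M (mzero M) x = x) \<and>
     (\<forall>x\<in>carrier M. \<exists>y\<in>carrier M. madd M x y = mzero M) \<and>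
     (\<forall>x\<in>carrier M. \<forall>r. smult M x r \<in> carrier M) \<and>
     (\<forall>x\<in>carrier M. \<forall>y\<in>carrier M. \<forall>r.
        smult M (madd M x y) r = madd M (smult M x r) (smult M y r)) \<and>
     (\<forall>x\<in>carrier M. \<forall>r s.
        smult M x (r + s) = madd M (smult M x r) (smult M x s)) \<and>
     (\<forall>x\<in>carrier M. \<forall>r s. smult M (smult M x r) s = smult M x (r * s)) \<and>
     (\<forall>x\<in>carrier M. smult M x 1 = x)"

definition submodule :: "'m set \<Rightarrow> ('r::ring_1, 'm) rmod \<Rightarrow> bool" where
  "submodule N M \<longleftrightarrow> N \<subseteq> carrier M \<and> mzero M \<in> N \<and>
     (\<forall>x\<in>N. \<forall>y\<in>N. madd M x y \<in> N) \<and> (\<forall>x\<in>N. \<forall>r. smult M x r \<in> N)"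

definition msum :: "('r, 'm) rmod \<Rightarrow> 'm set \<Rightarrow> 'm set \<Rightarrow> 'm set" where
  "msum M X Y = {madd M x y | x y. x \<in> X \<and> y \<in> Y}"

definition small :: "'m set \<Rightarrow> ('r::ring_1, 'm) rmod \<Rightarrow> bool" where
  "small K M \<longleftrightarrow> submodule K M \<and>
     (\<forall>L. submodule L M \<and> msum M K L = carrier M \<longrightarrow> L = carrier M)"

definition direct_summand :: "'m set \<Rightarrow> ('r::ring_1, 'm) rmod \<Rightarrow> bool" where
  "direct_summand D M \<longleftrightarrow> submodule D M \<and>
     (\<exists>D'. submodule D' M \<and> msum M D D' = carrier M \<and> D \<inter> D' = {mzero M})"

definition mcoset :: "('r, 'm) rmod \<Rightarrow> 'm \<Rightarrow> 'm set \<Rightarrow> 'm set" where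
  "mcoset M x X = {madd M x y | y. y \<in> X}"

definition quotient_mod :: "('r, 'm) rmod \<Rightarrow> 'm set \<Rightarrow> ('r, 'm set) rmod" where
  "quotient_mod M X =
     \<lparr> carrier = {mcoset M x X | x. x \<in> carrier M},
       madd = (\<lambda>A B. mcoset M (madd M (SOME a. a \<in> A) (SOME b. b \<in> B)) X),
       mzero = X,
       smult = (\<lambda>A r. mcoset M (smult M (SOME a. a \<in> A) r) X) \<rparr>"

definition quotient_sub :: "('r, 'm) rmod \<Rightarrow> 'm set \<Rightarrow> 'm set \<Rightarrow> 'm set set" where
  "quotient_sub M N X = {mcoset M x X | x. x \<in> N}"

definition beta_star :: "('r::ring_1, 'm) rmod \<Rightarrow> 'm set \<Rightarrow> 'm set \<Rightarrow> bool" where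
  "beta_star M X Y \<longleftrightarrow>
     small (quotient_sub M (msum M X Y) X) (quotient_mod M X) \<and>
     small (quotient_sub M (msum M X Y) Y) (quotient_mod M Y)"

definition noetherian :: "('r::ring_1, 'm) rmod \<Rightarrow> bool" where
  "noetherian M \<longleftrightarrow> (\<forall>f :: nat \<Rightarrow> 'm set.
     (\<forall>n. submodule (f n) M) \<and> (\<forall>n. f n \<subseteq> f (Suc n)) \<longrightarrow>
     (\<exists>N. \<forall>n\<ge>N. f n = f N))"

definition summand_sum_property :: "('r::ring_1, 'm) rmod \<Rightarrow> bool" where
  "summand_sum_property M \<longleftrightarrow> (\<forall>D1 D2. direct_summand D1 M \<and> direct_summand D2 M
     \<longrightarrow> direct_summand (msum M D1 D2) M)"

definition cyclic_sub :: "('r::ring_1, 'm) rmod \<Rightarrow> 'm \<Rightarrow> 'm set" where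
  "cyclic_sub M m = {smult M m r | r. True}"

definition goldie_star_lifting :: "('r::ring_1, 'm) rmod \<Rightarrow> bool" where
  "goldie_star_lifting M \<longleftrightarrow> (\<forall>X. submodule X M \<longrightarrow>
     (\<exists>D. direct_summand D M \<and> beta_star M X D))"

definition principally_goldie_star_lifting :: "('r::ring_1, 'm) rmod \<Rightarrow> bool" where
  "principally_goldie_star_lifting M \<longleftrightarrow> (\<forall>m\<in>carrier M.
     \<exists>D. direct_summand D M \<and> beta_star M (cyclic_sub M m) D)"

end

theory Submission
  imports Defs
begin

locale rm =
  fixes M :: "('r::ring_1, 'm) rmod"
  assumes rmod: "rmodule M"
begin

lemma zero_closed[simp]: "mzero M \<in> carrier M"
  using rmod unfolding rmodule_def by blast
lemma add_closed[simp]: "x \<in> carrier M \<Longrightarrow> y \<in> carrier M \<Longrightarrow> madd M x y \<in> carrier M"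
proof -
  have "\<forall>x\<in>carrier M. \<forall>y\<in>carrier M. madd M x y \<in> carrier M"
    using rmod unfolding rmodule_def by (elim conjE)
  then show "x \<in> carrier M \<Longrightarrow> y \<in> carrier M \<Longrightarrow> madd M x y \<in> carrier M" by blast
qed
lemma add_assoc: "x \<in> carrier M \<Longrightarrow> y \<in> carrier M \<Longrightarrow> z \<in> carrier M \<Longrightarrow>
   madd M (madd M x y) z = madd M x (madd M y z)"
  using rmod unfolding rmodule_def by blast
lemma add_comm: "x \<in> carrier M \<Longrightarrow> y \<in> carrier M \<Longrightarrow> madd M x y = madd M y x"
  using rmod unfolding rmodule_def by blast
lemma lzero[simp]: "x \<in> carrier M \<Longrightarrow> madd M (mzero M) x = x"
  using rmod unfolding rmodule_def by blast
lemma rzero[simp]: "x \<in> carrier M \<Longrightarrow> madd M x (mzero M) = x"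
  using lzero add_comm by simp
lemma add_lcomm: "x \<in> carrier M \<Longrightarrow> y \<in> carrier M \<Longrightarrow> z \<in> carrier M \<Longrightarrow>
   madd M x (madd M y z) = madd M y (madd M x z)"
  by (metis add_assoc add_comm)
lemma smult_closed[simp]: "x \<in> carrier M \<Longrightarrow> smult M x r \<in> carrier M"
  using rmod unfolding rmodule_def by blast
lemma smult_distl: "x \<in> carrier M \<Longrightarrow> y \<in> carrier M \<Longrightarrow>
   smult M (madd M x y) r = madd M (smult M x r) (smult M y r)"
  using rmod unfolding rmodule_def by blast
lemma smult_distr: "x \<in> carrier M \<Longrightarrow> smult M x (r + s) = madd M (smult M x r) (smult M x s)"
  using rmod unfolding rmodule_def by blast
lemma smult_assoc: "x \<in> carrier M \<Longrightarrow> smult M (smult M x r) s = smult M x (r * s)"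
  using rmod unfolding rmodule_def by blast
lemma smult_one[simp]: "x \<in> carrier M \<Longrightarrow> smult M x 1 = x"
  using rmod unfolding rmodule_def by blast
lemma neg_ex: "x \<in> carrier M \<Longrightarrow> \<exists>y\<in>carrier M. madd M x y = mzero M"
  using rmod unfolding rmodule_def by blast

lemma cancel: assumes "x \<in> carrier M" "y \<in> carrier M" "w \<in> carrier M" "madd M x y = madd M x w"
  shows "y = w"
proof -
  obtain n where n: "n \<in> carrier M" "madd M x n = mzero M" using neg_ex assms(1) by blast
  have "madd M n (madd M x y) = madd M n (madd M x w)" using assms by simp
  then show ?thesis using assms n by (metis add_assoc add_comm lzero)
qed

lemma smult_zero[simp]: "x \<in> carrier M \<Longrightarrow> smult M x 0 = mzero M"
proof -
  assume x: "x \<in> carrier M"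
  have "madd M (smult M x 1) (smult M x 0) = madd M (smult M x 1) (mzero M)"
    using smult_distr[OF x, of 1 0] x by simp
  then show ?thesis using cancel x by (metis smult_closed zero_closed)
qed

lemma neg_smult: "x \<in> carrier M \<Longrightarrow> madd M x (smult M x (-1)) = mzero M"
  using smult_distr[of x 1 "-1"] by simp

lemma sub_carrier: "submodule N M \<Longrightarrow> N \<subseteq> carrier M"
  unfolding submodule_def by blast
lemma sub_zero: "submodule N M \<Longrightarrow> mzero M \<in> N"
  unfolding submodule_def by blast
lemma sub_add: "submodule N M \<Longrightarrow> x \<in> N \<Longrightarrow> y \<in> N \<Longrightarrow> madd M x y \<in> N"
  unfolding submodule_def by blast
lemma sub_smult: "submodule N M \<Longrightarrow> x \<in> N \<Longrightarrow> smult M x r \<in> N"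
  unfolding submodule_def by blast

lemma cyclic_submodule: "m \<in> carrier M \<Longrightarrow> submodule (cyclic_sub M m) M"
  unfolding submodule_def cyclic_sub_def
proof (intro conjI ballI allI)
  assume m: "m \<in> carrier M"
  show "{smult M m r |r. True} \<subseteq> carrier M" using m by auto
  show "mzero M \<in> {smult M m r |r. True}" using m smult_zero[OF m] by (metis (mono_tags, lifting) mem_Collect_eq)
  fix x y assume "x \<in> {smult M m r |r. True}" "y \<in> {smult M m r |r. True}"
  then obtain r s where "x = smult M m r" "y = smult M m s" by blast
  then show "madd M x y \<in> {smult M m r |r. True}" using smult_distr[OF m, of r s] by (auto intro!: exI[where x="r+s"])
next
  fix x r assume m: "m \<in> carrier M" and "x \<in> {smult M m r |r. True}"
  then obtain s where "x = smult M m s" by blast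
  then show "smult M x r \<in> {smult M m r |r. True}" using smult_assoc[OF m] by auto
qed

lemma cyclic_mem: "m \<in> carrier M \<Longrightarrow> m \<in> cyclic_sub M m"
  unfolding cyclic_sub_def by (metis (mono_tags, lifting) mem_Collect_eq smult_one)

lemma cyclic_le: "submodule X M \<Longrightarrow> m \<in> X \<Longrightarrow> cyclic_sub M m \<subseteq> X"
  unfolding cyclic_sub_def using sub_smult by blast

lemma msum_carrier: "X \<subseteq> carrier M \<Longrightarrow> Y \<subseteq> carrier M \<Longrightarrow> msum M X Y \<subseteq> carrier M"
  unfolding msum_def by (auto intro: add_closed)

lemma msum_comm: "X \<subseteq> carrier M \<Longrightarrow> Y \<subseteq> carrier M \<Longrightarrow> msum M X Y = msum M Y X"
  unfolding msum_def by (auto, (metis add_comm subsetD)+)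

lemma msum_assoc: "X \<subseteq> carrier M \<Longrightarrow> Y \<subseteq> carrier M \<Longrightarrow> Z \<subseteq> carrier M \<Longrightarrow>
   msum M (msum M X Y) Z = msum M X (msum M Y Z)"
proof -
  assume c: "X \<subseteq> carrier M" "Y \<subseteq> carrier M" "Z \<subseteq> carrier M"
  show ?thesis
  proof
    show "msum M (msum M X Y) Z \<subseteq> msum M X (msum M Y Z)"
    proof
      fix a assume "a \<in> msum M (msum M X Y) Z"
      then obtain x y z where e: "x \<in> X" "y \<in> Y" "z \<in> Z" "a = madd M (madd M x y) z"
        unfolding msum_def by blast
      then have "a = madd M x (madd M y z)" using c add_assoc[of x y z] by (simp add: subset_iff)
      then show "a \<in> msum M X (msum M Y Z)" unfolding msum_def using e by blast
    qed
  next
    show "msum M X (msum M Y Z) \<subseteq> msum M (msum M X Y) Z"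
    proof
      fix a assume "a \<in> msum M X (msum M Y Z)"
      then obtain x y z where e: "x \<in> X" "y \<in> Y" "z \<in> Z" "a = madd M x (madd M y z)"
        unfolding msum_def by blast
      then have "a = madd M (madd M x y) z" using c add_assoc[of x y z] by (simp add: subset_iff)
      then show "a \<in> msum M (msum M X Y) Z" unfolding msum_def using e by blast
    qed
  qed
qed

lemma msum_lcomm: "X \<subseteq> carrier M \<Longrightarrow> Y \<subseteq> carrier M \<Longrightarrow> Z \<subseteq> carrier M \<Longrightarrow>
   msum M X (msum M Y Z) = msum M Y (msum M X Z)"
  by (metis msum_assoc msum_comm)

lemma msum_sub: assumes "submodule X M" "submodule Y M" shows "submodule (msum M X Y) M"
  unfolding submodule_def
proof (intro conjI ballI allI)
  note c = sub_carrier[OF assms(1)] sub_carrier[OF assms(2)]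
  show "msum M X Y \<subseteq> carrier M" using msum_carrier c by blast
  show "mzero M \<in> msum M X Y" unfolding msum_def using sub_zero assms by force
  fix a b assume "a \<in> msum M X Y" "b \<in> msum M X Y"
  then obtain x1 y1 x2 y2 where e: "a = madd M x1 y1" "b = madd M x2 y2" "x1 \<in> X" "x2 \<in> X" "y1 \<in> Y" "y2 \<in> Y"
    unfolding msum_def by blast
  have cc: "x1 \<in> carrier M" "x2 \<in> carrier M" "y1 \<in> carrier M" "y2 \<in> carrier M"
    using c e by blast+
  have "madd M a b = madd M (madd M x1 x2) (madd M y1 y2)"
    using cc by (simp add: e add_assoc add_lcomm)
  then show "madd M a b \<in> msum M X Y" unfolding msum_def using e sub_add assms by blast
next
  note c = sub_carrier[OF assms(1)] sub_carrier[OF assms(2)]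
  fix a r assume "a \<in> msum M X Y"
  then obtain x1 y1 where e: "a = madd M x1 y1" "x1 \<in> X" "y1 \<in> Y"
    unfolding msum_def by blast
  then have "smult M a r = madd M (smult M x1 r) (smult M y1 r)" using c smult_distl by blast
  then show "smult M a r \<in> msum M X Y" unfolding msum_def using e sub_smult assms by blast
qed

lemma msum_sup1: "submodule Y M \<Longrightarrow> X \<subseteq> carrier M \<Longrightarrow> X \<subseteq> msum M X Y"
proof
  fix x assume Y: "submodule Y M" and X: "X \<subseteq> carrier M" and x: "x \<in> X"
  have "x = madd M x (mzero M)" using X x by (simp add: subset_iff)
  then show "x \<in> msum M X Y" unfolding msum_def using sub_zero[OF Y] x by blast
qed

lemma msum_sup2: "submodule X M \<Longrightarrow> Y \<subseteq> carrier M \<Longrightarrow> Y \<subseteq> msum M X Y"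
  by (metis msum_comm msum_sup1 sub_carrier)

lemma msum_le: "submodule Z M \<Longrightarrow> X \<subseteq> Z \<Longrightarrow> Y \<subseteq> Z \<Longrightarrow> msum M X Y \<subseteq> Z"
  unfolding msum_def using sub_add by blast

lemma msum_idem: "submodule X M \<Longrightarrow> msum M X X = X"
  by (meson msum_le msum_sup1 order_refl sub_carrier subset_antisym)


lemma coset_mem: "submodule X M \<Longrightarrow> x \<in> carrier M \<Longrightarrow> x \<in> mcoset M x X"
proof -
  assume X: "submodule X M" and x: "x \<in> carrier M"
  have "x = madd M x (mzero M)" using x by simp
  then show "x \<in> mcoset M x X" unfolding mcoset_def using sub_zero[OF X] by blast
qed

lemma coset_sub: "submodule X M \<Longrightarrow> x \<in> carrier M \<Longrightarrow> mcoset M x X \<subseteq> carrier M"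
  unfolding mcoset_def using sub_carrier add_closed by blast

lemma coset_elem: "a \<in> mcoset M x X \<Longrightarrow> \<exists>u\<in>X. a = madd M x u"
  unfolding mcoset_def by blast

lemma coset_intro: "u \<in> X \<Longrightarrow> madd M x u \<in> mcoset M x X"
  unfolding mcoset_def by blast

lemma coset_eq: assumes X: "submodule X M" and x: "x \<in> carrier M" and a: "a \<in> mcoset M x X"
  shows "mcoset M a X = mcoset M x X"
proof -
  obtain u where u: "u \<in> X" "a = madd M x u" using coset_elem[OF a] by blast
  have uc: "u \<in> carrier M" using u X sub_carrier by blast
  show ?thesis
  proof
    show "mcoset M a X \<subseteq> mcoset M x X"
    proof
      fix b assume "b \<in> mcoset M a X"
      then obtain v where v: "v \<in> X" "b = madd M a v" using coset_elem by blast
      have vc: "v \<in> carrier M" using v X sub_carrier by blast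
      have "b = madd M x (madd M u v)" using v u uc x vc add_assoc by simp
      moreover have "madd M u v \<in> X" using sub_add[OF X u(1) v(1)] .
      ultimately show "b \<in> mcoset M x X" using coset_intro by simp
    qed
  next
    show "mcoset M x X \<subseteq> mcoset M a X"
    proof
      fix b assume "b \<in> mcoset M x X"
      then obtain w where w: "w \<in> X" "b = madd M x w" using coset_elem by blast
      define n where "n = smult M u (-1)"
      have n: "n \<in> X" "n \<in> carrier M" using sub_smult X u n_def uc by auto
      have wc: "w \<in> carrier M" using w X sub_carrier by blast
      have "madd M a (madd M n w) = madd M x (madd M (madd M u n) w)"
        using u uc n wc x add_assoc by simp
      also have "\<dots> = b" using neg_smult[OF uc] n_def w wc by simp
      moreover have "madd M n w \<in> X" using sub_add[OF X n(1) w(1)] .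
      ultimately show "b \<in> mcoset M a X" using coset_intro by metis
    qed
  qed
qed

lemma coset_zero: "submodule X M \<Longrightarrow> mcoset M (mzero M) X = X"
proof -
  assume X: "submodule X M"
  have "\<And>y. y \<in> X \<Longrightarrow> madd M (mzero M) y = y" using sub_carrier[OF X] by (simp add: subset_iff)
  then show ?thesis unfolding mcoset_def by force
qed

lemma coset_eqD: assumes "submodule X M" "x \<in> carrier M" "y \<in> carrier M"
  "mcoset M x X = mcoset M y X" shows "\<exists>u\<in>X. x = madd M y u"
proof -
  have "x \<in> mcoset M y X" using coset_mem[OF assms(1,2)] assms(4) by simp
  then show ?thesis using coset_elem by blast
qed

lemma qcarrier: "carrier (quotient_mod M X) = {mcoset M x X |x. x \<in> carrier M}"
  unfolding quotient_mod_def by simp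
lemma qzero: "mzero (quotient_mod M X) = X"
  unfolding quotient_mod_def by simp

lemma qadd: assumes X: "submodule X M" and x: "x \<in> carrier M" and y: "y \<in> carrier M"
  shows "madd (quotient_mod M X) (mcoset M x X) (mcoset M y X) = mcoset M (madd M x y) X"
proof -
  define a where "a = (SOME a. a \<in> mcoset M x X)"
  define b where "b = (SOME b. b \<in> mcoset M y X)"
  have a: "a \<in> mcoset M x X" unfolding a_def using coset_mem[OF X x] by (rule someI)
  have b: "b \<in> mcoset M y X" unfolding b_def using coset_mem[OF X y] by (rule someI)
  obtain u where u: "u \<in> X" "a = madd M x u" using coset_elem[OF a] by blast
  obtain v where v: "v \<in> X" "b = madd M y v" using coset_elem[OF b] by blast
  have uc: "u \<in> carrier M" "v \<in> carrier M" using u v X sub_carrier by blast+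
  have "madd M a b = madd M (madd M x u) (madd M y v)" using u v by simp
  also have "\<dots> = madd M x (madd M u (madd M y v))" using add_assoc[of x u "madd M y v"] uc x y by simp
  also have "\<dots> = madd M x (madd M y (madd M u v))" using add_lcomm[of u y v] uc y by simp
  also have "\<dots> = madd M (madd M x y) (madd M u v)" using add_assoc[of x y "madd M u v"] uc x y by simp
  finally have "madd M a b = madd M (madd M x y) (madd M u v)" .
  moreover have "madd M u v \<in> X" using sub_add[OF X u(1) v(1)] .
  ultimately have "madd M a b \<in> mcoset M (madd M x y) X" using coset_intro by metis
  then have "mcoset M (madd M a b) X = mcoset M (madd M x y) X" using coset_eq[OF X add_closed[OF x y]] by blast
  then show ?thesis unfolding quotient_mod_def a_def b_def by simp
qed

lemma qsmult: assumes X: "submodule X M" and x: "x \<in> carrier M"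
  shows "smult (quotient_mod M X) (mcoset M x X) r = mcoset M (smult M x r) X"
proof -
  define a where "a = (SOME a. a \<in> mcoset M x X)"
  have a: "a \<in> mcoset M x X" unfolding a_def using coset_mem[OF X x] by (rule someI)
  obtain u where u: "u \<in> X" "a = madd M x u" using coset_elem[OF a] by blast
  have uc: "u \<in> carrier M" using u X sub_carrier by blast
  have "smult M a r = madd M (smult M x r) (smult M u r)"
    using u(2) uc x smult_distl by simp
  moreover have "smult M u r \<in> X" using sub_smult[OF X u(1)] .
  ultimately have "smult M a r \<in> mcoset M (smult M x r) X" using coset_intro by metis
  then have "mcoset M (smult M a r) X = mcoset M (smult M x r) X" using coset_eq[OF X smult_closed[OF x]] by blast
  then show ?thesis unfolding quotient_mod_def a_def by simp
qed


lemma small_quot_iff: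
  assumes X: "submodule X M" and N: "submodule N M" and XN: "X \<subseteq> N"
  shows "small (quotient_sub M N X) (quotient_mod M X) \<longleftrightarrow>
    (\<forall>K. submodule K M \<and> msum M N K = carrier M \<longrightarrow> msum M X K = carrier M)"
    (is "small ?S ?Q \<longleftrightarrow> ?R")
proof
  assume sm: "small ?S ?Q"
  show ?R
  proof (intro allI impI, elim conjE)
    fix K assume K: "submodule K M" and NK: "msum M N K = carrier M"
    define L where "L = quotient_sub M (msum M X K) X"
    have XK: "submodule (msum M X K) M" using msum_sub X K by blast
    have XKc: "msum M X K \<subseteq> carrier M" using XK sub_carrier by blast
    have Lsub: "submodule L ?Q" unfolding submodule_def
    proof (intro conjI ballI allI)
      show "L \<subseteq> carrier ?Q" unfolding L_def quotient_sub_def qcarrier using XKc by blast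
      show "mzero ?Q \<in> L" unfolding L_def quotient_sub_def qzero
        using coset_zero[OF X] sub_zero[OF XK] by force
      fix A B assume "A \<in> L" "B \<in> L"
      then obtain a b where ab: "a \<in> msum M X K" "b \<in> msum M X K" "A = mcoset M a X" "B = mcoset M b X"
        unfolding L_def quotient_sub_def by blast
      have ac: "a \<in> carrier M" "b \<in> carrier M" using ab(1,2) XKc by blast+
      have "madd ?Q A B = mcoset M (madd M a b) X" using qadd[OF X ac] ab(3,4) by simp
      moreover have "madd M a b \<in> msum M X K" using sub_add[OF XK ab(1,2)] .
      ultimately show "madd ?Q A B \<in> L" unfolding L_def quotient_sub_def by blast
    next
      fix A r assume "A \<in> L"
      then obtain a where ab: "a \<in> msum M X K" "A = mcoset M a X"
        unfolding L_def quotient_sub_def by blast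
      have ac: "a \<in> carrier M" using ab(1) XKc by blast
      have "smult ?Q A r = mcoset M (smult M a r) X" using qsmult[OF X ac] ab(2) by simp
      moreover have "smult M a r \<in> msum M X K" using sub_smult[OF XK ab(1)] .
      ultimately show "smult ?Q A r \<in> L" unfolding L_def quotient_sub_def by blast
    qed
    have "msum ?Q ?S L = carrier ?Q"
    proof
      show "msum ?Q ?S L \<subseteq> carrier ?Q"
      proof
        fix C assume "C \<in> msum ?Q ?S L"
        then obtain A B where AB: "C = madd ?Q A B" "A \<in> ?S" "B \<in> L" unfolding msum_def by blast
        then obtain a b where ab: "a \<in> N" "b \<in> msum M X K" "A = mcoset M a X" "B = mcoset M b X"
          unfolding L_def quotient_sub_def by blast
        have "a \<in> carrier M" "b \<in> carrier M" using ab N sub_carrier XKc by blast+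
        then have "C = mcoset M (madd M a b) X" using AB(1) ab(3,4) qadd[OF X] by simp
        then show "C \<in> carrier ?Q" unfolding qcarrier using \<open>a \<in> carrier M\<close> \<open>b \<in> carrier M\<close> by auto
      qed
    next
      show "carrier ?Q \<subseteq> msum ?Q ?S L"
      proof
        fix C assume "C \<in> carrier ?Q"
        then obtain m where m: "m \<in> carrier M" "C = mcoset M m X" unfolding qcarrier by blast
        then obtain n k where nk: "n \<in> N" "k \<in> K" "m = madd M n k" using NK unfolding msum_def by blast
        have c: "n \<in> carrier M" "k \<in> carrier M" using nk N K sub_carrier by blast+
        have "k \<in> msum M X K" using msum_sup2[OF X] K sub_carrier nk by blast
        then have kL: "mcoset M k X \<in> L" unfolding L_def quotient_sub_def by blast
        have nS: "mcoset M n X \<in> ?S" unfolding quotient_sub_def using nk by blast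
        have "C = madd ?Q (mcoset M n X) (mcoset M k X)" using qadd[OF X c] m nk by simp
        then show "C \<in> msum ?Q ?S L" unfolding msum_def using kL nS by blast
      qed
    qed
    then have Lfull: "L = carrier ?Q" using sm Lsub unfolding small_def by blast
    show "msum M X K = carrier M"
    proof
      show "msum M X K \<subseteq> carrier M" by (rule XKc)
      show "carrier M \<subseteq> msum M X K"
      proof
        fix m assume m: "m \<in> carrier M"
        then have "mcoset M m X \<in> L" using Lfull unfolding qcarrier by blast
        then obtain w where w: "w \<in> msum M X K" "mcoset M m X = mcoset M w X"
          unfolding L_def quotient_sub_def by blast
        have wc: "w \<in> carrier M" using w XKc by blast
        obtain u where u: "u \<in> X" "m = madd M w u" using coset_eqD[OF X m wc w(2)] by blast
        obtain x k where xk: "x \<in> X" "k \<in> K" "w = madd M x k" using w unfolding msum_def by blast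
        have c: "x \<in> carrier M" "k \<in> carrier M" "u \<in> carrier M" using xk u X K sub_carrier by blast+
        have "m = madd M (madd M x k) u" using u xk by simp
        also have "\<dots> = madd M x (madd M k u)" using add_assoc[of x k u] c by simp
        also have "\<dots> = madd M x (madd M u k)" using add_comm[of k u] c by simp
        also have "\<dots> = madd M (madd M x u) k" using add_assoc[of x u k] c by simp
        finally have "m = madd M (madd M x u) k" .
        then show "m \<in> msum M X K" unfolding msum_def using sub_add[OF X] xk u by blast
      qed
    qed
  qed
next
  assume R: ?R
  have Nc: "N \<subseteq> carrier M" using N sub_carrier by blast
  have Ssub: "submodule ?S ?Q" unfolding submodule_def
  proof (intro conjI ballI allI)
    show "?S \<subseteq> carrier ?Q" unfolding quotient_sub_def qcarrier using Nc by blast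
    show "mzero ?Q \<in> ?S" unfolding quotient_sub_def qzero
      using coset_zero[OF X] sub_zero[OF N] by force
    fix A B assume "A \<in> ?S" "B \<in> ?S"
    then obtain a b where ab: "a \<in> N" "b \<in> N" "A = mcoset M a X" "B = mcoset M b X"
      unfolding quotient_sub_def by blast
    have ac: "a \<in> carrier M" "b \<in> carrier M" using ab(1,2) Nc by blast+
    have "madd ?Q A B = mcoset M (madd M a b) X" using qadd[OF X ac] ab(3,4) by simp
    moreover have "madd M a b \<in> N" using sub_add[OF N ab(1,2)] .
    ultimately show "madd ?Q A B \<in> ?S" unfolding quotient_sub_def by blast
  next
    fix A r assume "A \<in> ?S"
    then obtain a where ab: "a \<in> N" "A = mcoset M a X"
      unfolding quotient_sub_def by blast
    have ac: "a \<in> carrier M" using ab(1) Nc by blast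
    have "smult ?Q A r = mcoset M (smult M a r) X" using qsmult[OF X ac] ab(2) by simp
    moreover have "smult M a r \<in> N" using sub_smult[OF N ab(1)] .
    ultimately show "smult ?Q A r \<in> ?S" unfolding quotient_sub_def by blast
  qed
  show "small ?S ?Q" unfolding small_def
  proof (intro conjI allI impI, fact Ssub, elim conjE)
    fix L assume Lsub: "submodule L ?Q" and SL: "msum ?Q ?S L = carrier ?Q"
    define K where "K = {m \<in> carrier M. mcoset M m X \<in> L}"
    have Lc: "L \<subseteq> carrier ?Q" using Lsub unfolding submodule_def by blast
    have Ksub: "submodule K M" unfolding submodule_def
    proof (intro conjI ballI allI)
      show "K \<subseteq> carrier M" unfolding K_def by blast
      show "mzero M \<in> K" unfolding K_def using coset_zero[OF X] Lsub
        unfolding submodule_def qzero by simp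
      fix a b assume "a \<in> K" "b \<in> K"
      then have ab: "a \<in> carrier M" "b \<in> carrier M" "mcoset M a X \<in> L" "mcoset M b X \<in> L"
        unfolding K_def by blast+
      have "madd ?Q (mcoset M a X) (mcoset M b X) \<in> L" using Lsub ab(3,4) unfolding submodule_def by blast
      then have "mcoset M (madd M a b) X \<in> L" using qadd[OF X ab(1,2)] by simp
      then show "madd M a b \<in> K" unfolding K_def using ab by simp
    next
      fix a r assume "a \<in> K"
      then have ab: "a \<in> carrier M" "mcoset M a X \<in> L"
        unfolding K_def by blast+
      have "smult ?Q (mcoset M a X) r \<in> L" using Lsub ab(2) unfolding submodule_def by blast
      then have "mcoset M (smult M a r) X \<in> L" using qsmult[OF X ab(1)] by simp
      then show "smult M a r \<in> K" unfolding K_def using ab by simp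
    qed
    have "msum M N K = carrier M"
    proof
      show "msum M N K \<subseteq> carrier M" using msum_carrier Nc Ksub sub_carrier by blast
      show "carrier M \<subseteq> msum M N K"
      proof
        fix m assume m: "m \<in> carrier M"
        then have "mcoset M m X \<in> msum ?Q ?S L" using SL unfolding qcarrier by blast
        then obtain A B where AB: "mcoset M m X = madd ?Q A B" "A \<in> ?S" "B \<in> L"
          unfolding msum_def by blast
        obtain n where n: "n \<in> N" "A = mcoset M n X" using AB unfolding quotient_sub_def by blast
        obtain y where y: "y \<in> carrier M" "B = mcoset M y X" using AB Lc unfolding qcarrier by blast
        have nc: "n \<in> carrier M" using n Nc by blast
        have "mcoset M m X = mcoset M (madd M n y) X" using AB n y qadd[OF X nc y(1)] by simp
        then obtain u where u: "u \<in> X" "m = madd M (madd M n y) u"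
          using coset_eqD[OF X m add_closed[OF nc y(1)]] by blast
        have uc: "u \<in> carrier M" using u X sub_carrier by blast
        have "madd M y u \<in> mcoset M y X" using coset_intro[OF u(1)] .
        then have "mcoset M (madd M y u) X = mcoset M y X" using coset_eq[OF X y(1)] by blast
        then have "madd M y u \<in> K" unfolding K_def using AB y uc by simp
        moreover have "m = madd M n (madd M y u)" using u(2) add_assoc[of n y u] uc nc y by simp
        ultimately show "m \<in> msum M N K" unfolding msum_def using n by blast
      qed
    qed
    then have XK: "msum M X K = carrier M" using R Ksub by blast
    show "L = carrier ?Q"
    proof
      show "L \<subseteq> carrier ?Q" by (rule Lc)
      show "carrier ?Q \<subseteq> L"
      proof
        fix C assume "C \<in> carrier ?Q"
        then obtain m where m: "m \<in> carrier M" "C = mcoset M m X" unfolding qcarrier by blast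
        then obtain x k where xk: "x \<in> X" "k \<in> K" "m = madd M x k" using XK unfolding msum_def by blast
        have c: "x \<in> carrier M" "k \<in> carrier M" using xk X sub_carrier unfolding K_def by blast+
        have "m = madd M k x" using xk(3) add_comm[of x k] c by simp
        then have "m \<in> mcoset M k X" using coset_intro[OF xk(1), of k] by simp
        then have "mcoset M m X = mcoset M k X" using coset_eq[OF X c(2)] by blast
        then show "C \<in> L" using m xk unfolding K_def by simp
      qed
    qed
  qed
qed


definition relN :: "'m set \<Rightarrow> 'm set \<Rightarrow> bool" where
  "relN N X \<longleftrightarrow> (\<forall>K. submodule K M \<and> msum M N K = carrier M \<longrightarrow> msum M X K = carrier M)"

lemma beta_iff: assumes X: "submodule X M" and Y: "submodule Y M"
  shows "beta_star M X Y \<longleftrightarrow> relN (msum M X Y) X \<and> relN (msum M X Y) Y"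
proof -
  have S: "submodule (msum M X Y) M" using msum_sub X Y by blast
  have c: "X \<subseteq> carrier M" "Y \<subseteq> carrier M" using X Y sub_carrier by blast+
  have "X \<subseteq> msum M X Y" using msum_sup1 Y c by blast
  moreover have "Y \<subseteq> msum M X Y" using msum_sup2 X c by blast
  ultimately show ?thesis unfolding beta_star_def relN_def
    using small_quot_iff[OF X S] small_quot_iff[OF Y S] by simp
qed

lemma relN_sum:
  assumes A1: "submodule A1 M" and B1: "submodule B1 M" and A2: "submodule A2 M" and B2: "submodule B2 M"
    and r1: "relN (msum M A1 B1) A1" and r2: "relN (msum M A2 B2) A2"
  shows "relN (msum M (msum M A1 A2) (msum M B1 B2)) (msum M A1 A2)"
  unfolding relN_def
proof (intro allI impI, elim conjE)
  fix K assume K: "submodule K M" and H: "msum M (msum M (msum M A1 A2) (msum M B1 B2)) K = carrier M"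
  have c[simp]: "A1 \<subseteq> carrier M" "A2 \<subseteq> carrier M" "B1 \<subseteq> carrier M" "B2 \<subseteq> carrier M" "K \<subseteq> carrier M"
    using A1 A2 B1 B2 K sub_carrier by blast+
  note mc = msum_carrier
  define K' where "K' = msum M (msum M A2 B2) K"
  have K': "submodule K' M" unfolding K'_def using msum_sub A2 B2 K by blast
  have "msum M (msum M A1 B1) K' = msum M (msum M (msum M A1 A2) (msum M B1 B2)) K"
    unfolding K'_def by (simp add: msum_assoc msum_carrier msum_comm msum_lcomm)
  then have "msum M A1 K' = carrier M" using r1 K' H unfolding relN_def by blast
  then have "msum M (msum M A2 B2) (msum M A1 K) = carrier M"
    unfolding K'_def by (simp add: msum_assoc msum_carrier msum_comm msum_lcomm)
  moreover have "submodule (msum M A1 K) M" using msum_sub A1 K by blast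
  ultimately have "msum M A2 (msum M A1 K) = carrier M" using r2 unfolding relN_def by blast
  then show "msum M (msum M A1 A2) K = carrier M"
    by (simp add: msum_assoc msum_carrier msum_comm msum_lcomm)
qed

lemma beta_sum:
  assumes X1: "submodule X1 M" and Y1: "submodule Y1 M" and X2: "submodule X2 M" and Y2: "submodule Y2 M"
    and b1: "beta_star M X1 Y1" and b2: "beta_star M X2 Y2"
  shows "beta_star M (msum M X1 X2) (msum M Y1 Y2)"
proof -
  have c[simp]: "X1 \<subseteq> carrier M" "X2 \<subseteq> carrier M" "Y1 \<subseteq> carrier M" "Y2 \<subseteq> carrier M"
    using X1 X2 Y1 Y2 sub_carrier by blast+
  have r1: "relN (msum M X1 Y1) X1" "relN (msum M Y1 X1) Y1"
    using b1 beta_iff[OF X1 Y1] msum_comm[of X1 Y1] by auto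
  have r2: "relN (msum M X2 Y2) X2" "relN (msum M Y2 X2) Y2"
    using b2 beta_iff[OF X2 Y2] msum_comm[of X2 Y2] by auto
  have "relN (msum M (msum M X1 X2) (msum M Y1 Y2)) (msum M X1 X2)"
    using relN_sum[OF X1 Y1 X2 Y2 r1(1) r2(1)] .
  moreover have "relN (msum M (msum M Y1 Y2) (msum M X1 X2)) (msum M Y1 Y2)"
    using relN_sum[OF Y1 X1 Y2 X2 r1(2) r2(2)] .
  ultimately show ?thesis
    using beta_iff[OF msum_sub[OF X1 X2] msum_sub[OF Y1 Y2]]
    by (simp add: msum_comm[of "msum M X1 X2" "msum M Y1 Y2"] msum_carrier)
qed

lemma zero_sub: "submodule {mzero M} M"
  unfolding submodule_def using smult_zero by (simp, metis smult_assoc smult_zero zero_closed mult_zero_left)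

lemma beta_zero: "beta_star M {mzero M} {mzero M}"
  using beta_iff[OF zero_sub zero_sub] msum_idem[OF zero_sub] unfolding relN_def by simp

lemma zero_summand: "direct_summand {mzero M} M"
  unfolding direct_summand_def
proof (intro conjI exI[where x="carrier M"])
  show "submodule {mzero M} M" by (rule zero_sub)
  show "submodule (carrier M) M" unfolding submodule_def by simp
  show "msum M {mzero M} (carrier M) = carrier M"
  proof
    show "msum M {mzero M} (carrier M) \<subseteq> carrier M" using msum_carrier by simp
    show "carrier M \<subseteq> msum M {mzero M} (carrier M)"
    proof
      fix x assume x: "x \<in> carrier M"
      then have "x = madd M (mzero M) x" by simp
      then show "x \<in> msum M {mzero M} (carrier M)" unfolding msum_def using x by blast
    qed
  qed
  show "{mzero M} \<inter> carrier M = {mzero M}" by simp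
qed


lemma main_fwd:
  assumes noeth: "noetherian M" and ssp: "summand_sum_property M"
    and pgl: "principally_goldie_star_lifting M"
  shows "goldie_star_lifting M"
  unfolding goldie_star_lifting_def
proof (intro allI impI)
  fix X assume X: "submodule X M"
  define P where "P Y \<longleftrightarrow> submodule Y M \<and> Y \<subseteq> X \<and> (\<exists>D. direct_summand D M \<and> beta_star M Y D)" for Y
  have step: "P (msum M Y (cyclic_sub M m))" if PY: "P Y" and m: "m \<in> X" for Y m
  proof -
    have mc: "m \<in> carrier M" using m X sub_carrier by blast
    have PY': "submodule Y M" "Y \<subseteq> X" "\<exists>D. direct_summand D M \<and> beta_star M Y D"
      using PY unfolding P_def by simp_all
    obtain D1 where D1: "direct_summand D1 M" "beta_star M Y D1" using PY'(3) by (elim exE conjE)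
    have "\<exists>D. direct_summand D M \<and> beta_star M (cyclic_sub M m) D"
      using pgl mc unfolding principally_goldie_star_lifting_def by (rule bspec)
    then obtain D2 where D2: "direct_summand D2 M" "beta_star M (cyclic_sub M m) D2"
      by (elim exE conjE)
    have Ys: "submodule Y M" "Y \<subseteq> X" using PY'(1,2) .
    have cs: "submodule (cyclic_sub M m) M" using cyclic_submodule mc by blast
    have Ds: "submodule D1 M" "submodule D2 M" using D1(1) D2(1) by (simp_all add: direct_summand_def)
    have b: "beta_star M (msum M Y (cyclic_sub M m)) (msum M D1 D2)"
      using beta_sum[OF Ys(1) Ds(1) cs Ds(2) D1(2) D2(2)] .
    have d: "direct_summand (msum M D1 D2) M" using ssp D1(1) D2(1) unfolding summand_sum_property_def by simp
    have e: "\<exists>D. direct_summand D M \<and> beta_star M (msum M Y (cyclic_sub M m)) D"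
      by (rule exI[where x="msum M D1 D2"], rule conjI[OF d b])
    have l: "msum M Y (cyclic_sub M m) \<subseteq> X" using msum_le[OF X Ys(2) cyclic_le[OF X m]] .
    show ?thesis unfolding P_def using msum_sub[OF Ys(1) cs] l e by (intro conjI)
  qed
  define f where "f = rec_nat {mzero M} (\<lambda>n Y. if Y = X then Y else msum M Y (cyclic_sub M (SOME m. m \<in> X \<and> m \<notin> Y)))"
  have f0: "f 0 = {mzero M}" unfolding f_def by simp
  have fS: "f (Suc n) = (if f n = X then f n else msum M (f n) (cyclic_sub M (SOME m. m \<in> X \<and> m \<notin> f n)))" for n
    unfolding f_def by simp
  have Pf: "P (f n)" for n
  proof (induction n)
    case 0
    have "{mzero M} \<subseteq> X" using sub_zero[OF X] by blast
    then show ?case unfolding P_def f0 using zero_sub zero_summand beta_zero by blast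
  next
    case (Suc n)
    show ?case
    proof (cases "f n = X")
      case True then show ?thesis using fS Suc by simp
    next
      case False
      then have "\<exists>m. m \<in> X \<and> m \<notin> f n" using Suc unfolding P_def by blast
      then have "(SOME m. m \<in> X \<and> m \<notin> f n) \<in> X" by (rule someI2_ex) blast
      then show ?thesis using False fS step[OF Suc] by simp
    qed
  qed
  have mono: "f n \<subseteq> f (Suc n)" for n
  proof (cases "f n = X")
    case True then show ?thesis using fS by simp
  next
    case False
    have "f n \<subseteq> carrier M" using Pf[of n] sub_carrier unfolding P_def by blast
    moreover have "(SOME m. m \<in> X \<and> m \<notin> f n) \<in> carrier M"
    proof -
      have "\<exists>m. m \<in> X \<and> m \<notin> f n" using False Pf[of n] unfolding P_def by blast
      then have "(SOME m. m \<in> X \<and> m \<notin> f n) \<in> X" by (rule someI2_ex) blast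
      then show ?thesis using X sub_carrier by blast
    qed
    ultimately have "f n \<subseteq> msum M (f n) (cyclic_sub M (SOME m. m \<in> X \<and> m \<notin> f n))"
      using msum_sup1 cyclic_submodule by blast
    then show ?thesis using False fS[of n] by simp
  qed
  have "(\<forall>n. submodule (f n) M) \<and> (\<forall>n. f n \<subseteq> f (Suc n))"
    using Pf mono unfolding P_def by blast
  moreover have "\<forall>g :: nat \<Rightarrow> 'm set. (\<forall>n. submodule (g n) M) \<and> (\<forall>n. g n \<subseteq> g (Suc n)) \<longrightarrow>
     (\<exists>N. \<forall>n\<ge>N. g n = g N)" using noeth unfolding noetherian_def .
  ultimately have "\<exists>N. \<forall>n\<ge>N. f n = f N" by blast
  then obtain N where N: "\<forall>n\<ge>N. f n = f N" by blast
  have "f N = X"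
  proof (rule ccontr)
    assume ne: "f N \<noteq> X"
    define m where "m = (SOME m. m \<in> X \<and> m \<notin> f N)"
    have "\<exists>m. m \<in> X \<and> m \<notin> f N" using ne Pf[of N] unfolding P_def by blast
    then have m: "m \<in> X \<and> m \<notin> f N" unfolding m_def by (rule someI2_ex) blast
    have mc: "m \<in> carrier M" using m X sub_carrier by blast
    have "m \<in> msum M (f N) (cyclic_sub M m)"
    proof -
      have "submodule (f N) M" using Pf[of N] unfolding P_def by blast
      moreover have "cyclic_sub M m \<subseteq> carrier M" using sub_carrier[OF cyclic_submodule[OF mc]] .
      ultimately show ?thesis using msum_sup2 cyclic_mem[OF mc] by blast
    qed
    moreover have "f (Suc N) = msum M (f N) (cyclic_sub M m)"
      unfolding m_def using fS[of N] if_not_P[OF ne] by (rule trans)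
    ultimately have "m \<in> f (Suc N)" by (simp only:)
    moreover have "f (Suc N) = f N" by (rule N[rule_format]) simp
    ultimately show False using m by simp
  qed
  then show "\<exists>D. direct_summand D M \<and> beta_star M X D" using Pf[of N] unfolding P_def by blast
qed

lemma main_bwd: "goldie_star_lifting M \<Longrightarrow> principally_goldie_star_lifting M"
  unfolding goldie_star_lifting_def principally_goldie_star_lifting_def
proof (intro ballI impI)
  fix m assume H: "\<forall>X. submodule X M \<longrightarrow> (\<exists>D. direct_summand D M \<and> beta_star M X D)"
    and m: "m \<in> carrier M"
  show "\<exists>D. direct_summand D M \<and> beta_star M (cyclic_sub M m) D"
    using H cyclic_submodule[OF m] by blast
qed

end

theorem proposition3p18:
  fixes M :: "('r::ring_1, 'm) rmod"
  assumes "rmodule M" and "noetherian M" and "summand_sum_property M"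
  shows "principally_goldie_star_lifting M \<longleftrightarrow> goldie_star_lifting M"
proof -
  interpret rm M by unfold_locales (rule assms(1))
  show ?thesis using main_fwd[OF assms(2,3)] main_bwd by blast
qed

end
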